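(* Let $m\ge 2$ and $N\ge 2$ be integers and let $\mathbf X=(x_{il})_{N\times m}$ be a design whose rows lie in $S_b=\{\mathbf x\in\mathbb R^m:\ \sum_{l=1}^m x_l=1,\ 0\le x_l\le 1,\ l=1,\dots,m\}$. For $\boldsymbol\theta=(\theta_1,\dots,\theta_m)'$ and $p>0$ define $$f(\mathbf X\mid\boldsymbol\theta)=\sum_{i=1}^{N-1}\sum_{j=i+1}^{N}\left(\frac{1}{\sum_{l=1}^m\theta_l(x_{il}-x_{jl})^2}\right)^{p/2}.$$ Take $p=2m$ and let $\boldsymbol\theta$ follow the uniform distribution on the region $H=\{\boldsymbol\theta:\ 0\le\theta_l\le1,\ \sum_{l=1}^m\theta_l=1\}$. Then there is a constant $C$ (not depending on $\mathbf X$) such that $$E_{\boldsymbol\theta}\big(f(\mathbf X\mid\boldsymbol\theta)\big)=\int_H f(\mathbf X\mid\boldsymbol\theta)\,dp(\boldsymbol\theta)=C\sum_{i=1}^{N-1}\sum_{j=i+1}^{N}\frac{1}{\prod_{l=1}^m (x_{il}-x_{jl})^{2}}.$$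
   Context: The uniform distribution on $H$ is the normalized $(m-1)$-dimensional surface (Lebesgue) measure on the simplex $H$. Both sides are understood as values in $[0,\infty]$ (a term with some $x_{il}=x_{jl}$ is $+\infty$). *)

theory Defs
  imports "HOL-Analysis.Analysis"
begin

text \<open>Vectors in R^m are functions nat => real indexed by 0..m-1;
 a design X is nat => nat => real with rows 0..N-1 and columns 0..m-1.\<close>

definition S_b :: "nat \<Rightarrow> (nat \<Rightarrow> real) set" where
  "S_b m = {x. (\<Sum>l<m. x l) = 1 \<and> (\<forall>l<m. 0 \<le> x l \<and> x l \<le> 1)}"

definition f_crit :: "nat \<Rightarrow> nat \<Rightarrow> real \<Rightarrow> (nat \<Rightarrow> nat \<Rightarrow> real) \<Rightarrow> (nat \<Rightarrow> real) \<Rightarrow> ennreal" where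
  "f_crit m N p X \<theta> =
     (\<Sum>i<N. \<Sum>j\<in>{i+1..<N}.
        (let D = (\<Sum>l<m. \<theta> l * (X i l - X j l)^2)
         in if D = 0 then (\<infinity>::ennreal) else ennreal ((1 / D) powr (p / 2))))"

text \<open>Parametrisation of the simplex H by its first m-1 coordinates.\<close>
definition H_param :: "nat \<Rightarrow> (nat \<Rightarrow> real) set" where
  "H_param m = {t \<in> {..<m-1} \<rightarrow>\<^sub>E UNIV. (\<forall>l<m-1. 0 \<le> t l) \<and> (\<Sum>l<m-1. t l) \<le> 1}"

definition theta_of :: "nat \<Rightarrow> (nat \<Rightarrow> real) \<Rightarrow> (nat \<Rightarrow> real)" where
  "theta_of m t = (\<lambda>l. if l < m - 1 then t l else if l = m - 1 then 1 - (\<Sum>k<m-1. t k) else undefined)"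

text \<open>Uniform distribution on H (normalised (m-1)-dimensional surface measure):
 the affine chart t |-> theta_of m t has constant Jacobian, so this is the image of
 the uniform (normalised Lebesgue) distribution on the chart domain.\<close>
definition H_uniform :: "nat \<Rightarrow> (nat \<Rightarrow> real) measure" where
  "H_uniform m = distr (uniform_measure (PiM {..<m-1} (\<lambda>_. lborel)) (H_param m))
                       (PiM {..<m} (\<lambda>_. lborel)) (theta_of m)"

end

theory Submission imports Defs begin

lemma PiM_scale:
  fixes c :: real and I :: "'i set"
  assumes "finite I" "c > 0"
  shows "f \<in> borel_measurable (PiM I (\<lambda>_. lborel)) \<Longrightarrow>
    (\<integral>\<^sup>+x. f x \<partial>PiM I (\<lambda>_. lborel)) =
    ennreal (c ^ card I) * (\<integral>\<^sup>+x. f (\<lambda>i\<in>I. c * x i) \<partial>PiM I (\<lambda>_. lborel))"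
  using assms(1)
proof (induction I arbitrary: f rule: finite_induct)
  case empty
  show ?case
    by (auto simp: PiM_empty nn_integral_count_space_finite)
next
  case (insert i I f)
  interpret product_sigma_finite "\<lambda>_. lborel::real measure" by standard
  note [measurable] = insert.prems
  have m2: "(\<lambda>(x,y). f (x(i := c * y))) \<in> borel_measurable (PiM I (\<lambda>_. lborel) \<Otimes>\<^sub>M lborel)"
    by measurable
  define h where "h x = (\<integral>\<^sup>+y. f (x(i := c * y)) \<partial>lborel)" for x
  have hm: "h \<in> borel_measurable (PiM I (\<lambda>_. lborel))"
    unfolding h_def using lborel.borel_measurable_nn_integral[of "\<lambda>x y. f (x(i := c * y))", OF m2] .
  have "(\<integral>\<^sup>+x. f x \<partial>PiM (insert i I) (\<lambda>_. lborel)) =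
      (\<integral>\<^sup>+ x. (\<integral>\<^sup>+ y. f (x(i := y)) \<partial>lborel) \<partial>PiM I (\<lambda>_. lborel))"
    using insert by (intro product_nn_integral_insert) auto
  also have "\<dots> = (\<integral>\<^sup>+ x. ennreal c * h x \<partial>PiM I (\<lambda>_. lborel))"
  proof (rule nn_integral_cong)
    fix x assume x: "x \<in> space (PiM I (\<lambda>_. lborel::real measure))"
    have "(\<lambda>y. f (x(i := y))) \<in> borel_measurable borel"
      using measurable_comp[OF measurable_component_update[OF x insert(2)] insert.prems]
      by (simp add: comp_def)
    from nn_integral_real_affine[OF this, of c 0] insert.hyps \<open>c > 0\<close>
    show "(\<integral>\<^sup>+ y. f (x(i := y)) \<partial>lborel) = ennreal c * h x"
      by (simp add: h_def)
  qed
  also have "\<dots> = ennreal c * (\<integral>\<^sup>+ x. h x \<partial>PiM I (\<lambda>_. lborel))"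
    using hm by (rule nn_integral_cmult)
  also have "(\<integral>\<^sup>+ x. h x \<partial>PiM I (\<lambda>_. lborel)) =
      ennreal (c ^ card I) * (\<integral>\<^sup>+x. h (\<lambda>j\<in>I. c * x j) \<partial>PiM I (\<lambda>_. lborel))"
    using insert.IH[OF hm] .
  also have "(\<integral>\<^sup>+x. h (\<lambda>j\<in>I. c * x j) \<partial>PiM I (\<lambda>_. lborel)) =
     (\<integral>\<^sup>+x. f (\<lambda>j\<in>insert i I. c * x j) \<partial>PiM (insert i I) (\<lambda>_. lborel))"
  proof -
    have "(\<integral>\<^sup>+x. f (\<lambda>j\<in>insert i I. c * x j) \<partial>PiM (insert i I) (\<lambda>_. lborel)) =
      (\<integral>\<^sup>+ x. (\<integral>\<^sup>+ y. f (\<lambda>j\<in>insert i I. c * (x(i := y)) j) \<partial>lborel) \<partial>PiM I (\<lambda>_. lborel))"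
      using insert by (intro product_nn_integral_insert) auto
    also have "\<dots> = (\<integral>\<^sup>+x. h (\<lambda>j\<in>I. c * x j) \<partial>PiM I (\<lambda>_. lborel))"
    proof (rule nn_integral_cong)
      fix x assume x: "x \<in> space (PiM I (\<lambda>_. lborel::real measure))"
      have "\<And>y. (\<lambda>j\<in>insert i I. c * (x(i := y)) j) = (\<lambda>j\<in>I. c * x j)(i := c * y)"
        using insert.hyps by (auto simp: fun_eq_iff)
      then show "(\<integral>\<^sup>+ y. f (\<lambda>j\<in>insert i I. c * (x(i := y)) j) \<partial>lborel) = h (\<lambda>j\<in>I. c * x j)"
        by (simp add: h_def)
    qed
    finally show ?thesis by simp
  qed
  also have "ennreal c * (ennreal (c ^ card I) * X) = ennreal (c ^ card (insert i I)) * X" for X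
    using insert.hyps \<open>c > 0\<close> by (simp add: ennreal_mult mult.assoc)
  finally show ?case .
qed

lemma inv_pow_ennreal: "(D::real) > 0 \<Longrightarrow> inverse (ennreal D) ^ n = ennreal (1 / D ^ n)"
  by (simp add: inverse_ennreal ennreal_power power_one_over inverse_eq_divide)

lemma oneD:
  fixes A B :: real and k :: nat
  assumes A: "A > 0" and B: "B > 0"
  shows "(\<integral>\<^sup>+ y. indicator {0..<1} y * ennreal ((1-y)^k) * inverse (ennreal ((1-y)*A + y*B)) ^ (k+2) \<partial>lborel)
     = inverse (ennreal ((k+1)*B)) * inverse (ennreal A) ^ (k+1)"
proof -
  define den where "den y = (1-y)*A + y*B" for y
  define g where "g y = (1-y)^k / den y ^ (k+2)" for y
  define r where "r y = (1-y) / den y" for y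
  define F where "F y = - (r y ^ (k+1)) / ((k+1)*B)" for y
  have denpos: "den y > 0" if "y \<in> {0..1}" for y
  proof (cases "y = 1")
    case True then show ?thesis using B by (simp add: den_def)
  next
    case False
    then have "(1-y)*A > 0" using that A by auto
    moreover have "y * B \<ge> 0" using that B by auto
    ultimately show ?thesis by (simp add: den_def)
  qed
  have dr: "(r has_real_derivative (- B / den y ^ 2)) (at y)" if "y \<in> {0..1}" for y
  proof -
    have d: "(den has_real_derivative (B - A)) (at y)"
      unfolding den_def by (rule derivative_eq_intros refl | simp)+
    have "(r has_real_derivative ((-1) * den y - (1-y) * (B - A)) / (den y * den y)) (at y)"
      unfolding r_def
      by (rule DERIV_divide[OF _ d]) (use denpos[OF that] in \<open>auto intro!: derivative_eq_intros\<close>)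
    moreover have "((-1) * den y - (1-y) * (B - A)) / (den y * den y) = - B / den y ^ 2"
      by (simp add: den_def power2_eq_square algebra_simps)
    ultimately show ?thesis by simp
  qed
  have dF: "(F has_real_derivative g y) (at y)" if y: "y \<in> {0..1}" for y
  proof -
    have "((\<lambda>y. r y ^ (k+1)) has_real_derivative (of_nat (k+1) * r y ^ k * (- B / den y ^ 2))) (at y)" (is ?P)
      using DERIV_power[OF dr[OF y], of "k+1"] by (simp add: mult_ac)
    then have "(F has_real_derivative - (of_nat (k+1) * r y ^ k * (- B / den y ^ 2)) / ((k+1)*B)) (at y)"
      unfolding F_def using DERIV_cdivide[OF DERIV_minus[OF \<open>?P\<close>], of "(k+1)*B"] by simp
    moreover have "- (of_nat (k+1) * r y ^ k * (- B / den y ^ 2)) / ((k+1)*B) = g y"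
    proof -
      have "- (of_nat (k+1) * r y ^ k * (- B / den y ^ 2)) / ((k+1)*B) = r y ^ k / den y ^ 2"
      proof -
        have aux: "- (c * R * (- B / Q)) / (c*B) = R / Q" if "c \<noteq> 0" "B \<noteq> 0" for c R Q :: real
          using that by (simp add: field_simps)
        show ?thesis by (rule aux) (use B in auto)
      qed
      also have "\<dots> = g y"
        using denpos[OF y] by (simp add: g_def r_def power_divide power_add power2_eq_square)
      finally show ?thesis .
    qed
    ultimately show ?thesis by simp
  qed
  have g0: "g y \<ge> 0" if "y \<in> {0..1}" for y
    using denpos[OF that] that unfolding g_def by auto
  have gm: "g \<in> borel_measurable borel"
    unfolding g_def den_def by measurable
  have "(\<integral>\<^sup>+ y. ennreal (g y) * indicator {0..1} y \<partial>lborel) = ennreal (F 1 - F 0)"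
    by (rule nn_integral_FTC_Icc[OF gm dF g0]) auto
  also have "(\<integral>\<^sup>+ y. ennreal (g y) * indicator {0..1} y \<partial>lborel) =
     (\<integral>\<^sup>+ y. indicator {0..<1} y * ennreal ((1-y)^k) * inverse (ennreal ((1-y)*A + y*B)) ^ (k+2) \<partial>lborel)"
  proof (rule nn_integral_cong_AE)
    show "AE y in lborel. ennreal (g y) * indicator {0..1} y =
       indicator {0..<1} y * ennreal ((1-y)^k) * inverse (ennreal ((1-y)*A + y*B)) ^ (k+2)"
      using AE_lborel_singleton[of 1]
    proof eventually_elim
      case (elim y)
      show ?case
      proof (cases "y \<in> {0..1}")
        case True
        then have "den y > 0" by (rule denpos)
        have e: "inverse (ennreal (den y)) ^ (k+2) = ennreal (1/den y^(k+2))"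
          by (rule inv_pow_ennreal) fact
        have "ennreal ((1-y)^k) * ennreal (1/den y^(k+2)) = ennreal ((1-y)^k * (1/den y^(k+2)))"
          using True \<open>den y > 0\<close> by (intro ennreal_mult[symmetric]) auto
        then show ?thesis using True elim
          by (simp only: g_def indicator_def den_def[symmetric] e) (simp add: divide_inverse)
      qed (auto simp: indicator_def)
    qed
  qed
  also have "F 1 - F 0 = inverse ((k+1)*B) * inverse A ^ (k+1)"
    using A B by (simp add: F_def r_def den_def power_divide field_simps)
  also have "ennreal \<dots> = inverse (ennreal ((k+1)*B)) * inverse (ennreal A) ^ (k+1)"
  proof -
    have "ennreal (inverse ((k+1)*B) * inverse A ^ (k+1)) = ennreal (inverse ((k+1)*B)) * ennreal (1 / A^(k+1))"
      using A B by (subst ennreal_mult[symmetric]) (auto simp: power_one_over inverse_eq_divide)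
    also have "ennreal (inverse ((k+1)*B)) = inverse (ennreal ((k+1)*B))"
      using B by (intro inverse_ennreal[symmetric]) auto
    also have "ennreal (1 / A^(k+1)) = inverse (ennreal A) ^ (k+1)"
      using A by (intro inv_pow_ennreal[symmetric]) auto
    finally show ?thesis .
  qed
  finally show ?thesis by simp
qed

definition Mn :: "nat \<Rightarrow> (nat \<Rightarrow> real) measure" where
  "Mn n = PiM {..<n} (\<lambda>_. lborel)"
definition SS :: "nat \<Rightarrow> (nat \<Rightarrow> real) set" where
  "SS n = {t. (\<forall>l\<in>{..<n}. 0 \<le> t l) \<and> (\<Sum>l<n. t l) \<le> 1}"
definition Dn :: "nat \<Rightarrow> (nat \<Rightarrow> real) \<Rightarrow> (nat \<Rightarrow> real) \<Rightarrow> real" where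
  "Dn n a t = a n * (1 - (\<Sum>l<n. t l)) + (\<Sum>l<n. t l * a l)"
definition FI :: "nat \<Rightarrow> (nat \<Rightarrow> real) \<Rightarrow> (nat \<Rightarrow> real) \<Rightarrow> ennreal" where
  "FI n a t = indicator (SS n) t * inverse (ennreal (Dn n a t)) ^ Suc n"

lemma SS_meas[measurable]: "SS n \<inter> space (Mn n) \<in> sets (Mn n)"
proof -
  have "SS n \<inter> space (Mn n) =
     Pi\<^sub>E {..<n} (\<lambda>_. {0..}) \<inter> (\<lambda>x. \<Sum>l<n. x l) -` {..1} \<inter> space (Mn n)"
    by (auto simp: SS_def Mn_def space_PiM)
  also have "\<dots> \<in> sets (Mn n)"
    unfolding Mn_def by measurable
  finally show ?thesis .
qed

lemma Dn_meas[measurable]: "Dn n a \<in> borel_measurable (Mn n)"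
  unfolding Dn_def Mn_def by measurable

lemma SS_ind_meas[measurable]: "indicator (SS n) \<in> borel_measurable (Mn n)"
    by (rule borel_measurable_indicator') (use SS_meas in \<open>simp add: Int_def conj_commute\<close>)

lemma FI_meas[measurable]: "FI n a \<in> borel_measurable (Mn n)"
  unfolding FI_def by measurable

lemma inv_mult_ennreal:
  assumes "(x::real) > 0" "y > 0"
  shows "inverse (ennreal x) * inverse (ennreal y) = inverse (ennreal (x * y))"
proof -
  have "inverse (ennreal x) * inverse (ennreal y) = ennreal (inverse x) * ennreal (inverse y)"
    using assms by (simp add: inverse_ennreal)
  also have "\<dots> = ennreal (inverse x * inverse y)"
    using assms by (intro ennreal_mult[symmetric]) auto
  also have "\<dots> = inverse (ennreal (x * y))"
    using assms by (simp add: inverse_ennreal inverse_mult_distrib)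
  finally show ?thesis .
qed

lemma Dn_pos:
  assumes "\<forall>l\<le>n. 0 < a l" "t \<in> SS n"
  shows "Dn n a t > 0"
proof -
  define \<mu> where "\<mu> = Min (a ` {..n})"
  have mu: "\<mu> > 0" "\<And>l. l \<le> n \<Longrightarrow> \<mu> \<le> a l"
    using assms(1) by (auto simp: \<mu>_def)
  have t: "\<And>l. l < n \<Longrightarrow> 0 \<le> t l" "(\<Sum>l<n. t l) \<le> 1" using assms(2) by (auto simp: SS_def)
  have "(\<Sum>l<n. t l * \<mu>) \<le> (\<Sum>l<n. t l * a l)"
    using t mu by (intro sum_mono mult_left_mono) auto
  moreover have "\<mu> * (1 - (\<Sum>l<n. t l)) \<le> a n * (1 - (\<Sum>l<n. t l))"
    using t mu by (intro mult_right_mono) auto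
  ultimately have "\<mu> * (1 - (\<Sum>l<n. t l)) + (\<Sum>l<n. t l * \<mu>) \<le> Dn n a t"
    unfolding Dn_def by linarith
  moreover have "\<mu> * (1 - (\<Sum>l<n. t l)) + (\<Sum>l<n. t l * \<mu>) = \<mu>"
    by (simp add: sum_distrib_left[symmetric] sum_distrib_right[symmetric] algebra_simps)
  ultimately show ?thesis using mu by linarith
qed

lemma main_formula:
  "(\<forall>l\<le>n. 0 < a l) \<Longrightarrow> (\<integral>\<^sup>+t. FI n a t \<partial>Mn n) = inverse (ennreal (fact n * (\<Prod>l\<le>n. a l)))"
proof (induction n arbitrary: a)
  case 0
  have "(\<integral>\<^sup>+t. FI 0 a t \<partial>Mn 0) = inverse (ennreal (a 0))"
    by (simp add: Mn_def PiM_empty nn_integral_count_space_finite FI_def SS_def Dn_def)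
  then show ?case by simp
next
  case (Suc k a)
  interpret product_sigma_finite "\<lambda>_. lborel::real measure" by standard
  interpret Mk: sigma_finite_measure "Mn k"
    unfolding Mn_def by (rule sigma_finite) auto
  interpret pair_sigma_finite lborel "Mn k" by standard
  define a' where "a' = a(k := a (Suc k))"
  have a'pos: "\<forall>l\<le>k. 0 < a' l" using Suc.prems by (auto simp: a'_def)
  define G where "G y \<phi> = indicator (SS k) \<phi> * inverse (ennreal ((1-y) * Dn k a' \<phi> + y * a k)) ^ (k+2)"
    for y \<phi>
  have Gm[measurable]: "(\<lambda>(y, \<phi>). G y \<phi>) \<in> borel_measurable (lborel \<Otimes>\<^sub>M Mn k)"
    unfolding G_def by measurable
  have "(\<integral>\<^sup>+t. FI (Suc k) a t \<partial>Mn (Suc k)) =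
     (\<integral>\<^sup>+ y. (\<integral>\<^sup>+ x. FI (Suc k) a (x(k := y)) \<partial>Mn k) \<partial>lborel)"
    unfolding Mn_def lessThan_Suc
    by (rule product_nn_integral_insert_rev) (auto simp: lessThan_Suc[symmetric] FI_meas[unfolded Mn_def])
  also have "\<dots> = (\<integral>\<^sup>+ y. indicator {0..<1} y * (ennreal ((1-y)^k) * (\<integral>\<^sup>+ \<phi>. G y \<phi> \<partial>Mn k)) \<partial>lborel)"
  proof (rule nn_integral_cong_AE)
    show "AE y in lborel. (\<integral>\<^sup>+ x. FI (Suc k) a (x(k := y)) \<partial>Mn k) =
       indicator {0..<1} y * (ennreal ((1-y)^k) * (\<integral>\<^sup>+ \<phi>. G y \<phi> \<partial>Mn k))"
      using AE_lborel_singleton[of 1]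
    proof eventually_elim
      case (elim y)
      show ?case
      proof (cases "y \<in> {0..<1}")
        case True
        then have c: "1 - y > 0" by auto
        have fm: "(\<lambda>x. FI (Suc k) a (x(k := y))) \<in> borel_measurable (PiM {..<k} (\<lambda>_. lborel))"
        proof -
          have mm: "(\<lambda>x. x(k := y)) \<in> measurable (PiM {..<k} (\<lambda>_. lborel)) (PiM (insert k {..<k}) (\<lambda>_. lborel::real measure))"
            by measurable
          then show ?thesis
            using measurable_comp[OF mm FI_meas[of "Suc k" a, unfolded Mn_def lessThan_Suc]]
            by (simp add: comp_def)
        qed
        have "(\<integral>\<^sup>+ x. FI (Suc k) a (x(k := y)) \<partial>Mn k) = ennreal ((1-y)^k) *
            (\<integral>\<^sup>+ \<phi>. FI (Suc k) a ((\<lambda>i\<in>{..<k}. (1-y) * \<phi> i)(k := y)) \<partial>Mn k)"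
          unfolding Mn_def using PiM_scale[OF _ c fm] by simp
        also have "(\<integral>\<^sup>+ \<phi>. FI (Suc k) a ((\<lambda>i\<in>{..<k}. (1-y) * \<phi> i)(k := y)) \<partial>Mn k) =
            (\<integral>\<^sup>+ \<phi>. G y \<phi> \<partial>Mn k)"
        proof (rule nn_integral_cong)
          fix \<phi> :: "nat \<Rightarrow> real"
          define x where "x = (\<lambda>i\<in>{..<k}. (1-y) * \<phi> i)(k := y)"
          have s1: "(\<Sum>l<Suc k. x l) = (1-y) * (\<Sum>l<k. \<phi> l) + y"
            by (simp add: x_def sum_distrib_left)
          have s2: "(\<Sum>l<Suc k. x l * a l) = (1-y) * (\<Sum>l<k. \<phi> l * a' l) + y * a k"
            by (simp add: x_def sum_distrib_left a'_def mult_ac)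
          have D: "Dn (Suc k) a x = (1-y) * Dn k a' \<phi> + y * a k"
            unfolding Dn_def s1 s2 by (simp add: a'_def algebra_simps)
          have S: "x \<in> SS (Suc k) \<longleftrightarrow> \<phi> \<in> SS k"
          proof -
            have "(\<forall>l\<in>{..<Suc k}. 0 \<le> x l) \<longleftrightarrow> (\<forall>l\<in>{..<k}. 0 \<le> \<phi> l)"
              using True c by (auto simp: x_def less_Suc_eq zero_le_mult_iff)
            moreover have "(\<Sum>l<Suc k. x l) \<le> 1 \<longleftrightarrow> (\<Sum>l<k. \<phi> l) \<le> 1"
              using c unfolding s1 by (smt (verit) mult_le_cancel_left1 mult_cancel_left1)
            ultimately show ?thesis unfolding SS_def by blast
          qed
          show "FI (Suc k) a x = G y \<phi>"
            unfolding FI_def G_def D by (simp add: S indicator_def)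
        qed
        finally have "(\<integral>\<^sup>+ x. FI (Suc k) a (x(k := y)) \<partial>Mn k) = ennreal ((1-y)^k) * (\<integral>\<^sup>+ \<phi>. G y \<phi> \<partial>Mn k)" .
        then show ?thesis using True by (simp only: indicator_simps mult_1)
      next
        case False
        have "FI (Suc k) a (x(k := y)) = 0" for x
        proof -
          have "x(k := y) \<notin> SS (Suc k)"
          proof
            assume A: "x(k := y) \<in> SS (Suc k)"
            then have B: "\<forall>l\<in>{..<Suc k}. 0 \<le> (x(k := y)) l" "(\<Sum>l<Suc k. (x(k := y)) l) \<le> 1"
              unfolding SS_def by blast+
            have "\<forall>l<k. 0 \<le> x l" using B(1)
              by (metis fun_upd_other lessThan_iff less_SucI less_irrefl)
            moreover have "0 \<le> y" using B(1) by (metis fun_upd_same lessThan_iff lessI)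
            moreover have "(\<Sum>l<k. x l) + y \<le> 1" using B(2) by simp
            moreover have "(\<Sum>l<k. x l) \<ge> 0" using calculation(1) by (intro sum_nonneg) auto
            ultimately show False using False elim by auto
          qed
          then show ?thesis by (simp add: FI_def)
        qed
        then show ?thesis using False by simp
      qed
    qed
  qed
  also have "\<dots> = (\<integral>\<^sup>+ y. (\<integral>\<^sup>+ \<phi>. indicator {0..<1} y * ennreal ((1-y)^k) * G y \<phi> \<partial>Mn k) \<partial>lborel)"
    by (intro nn_integral_cong) (simp add: nn_integral_cmult mult.assoc)
  also have "\<dots> = (\<integral>\<^sup>+ \<phi>. (\<integral>\<^sup>+ y. indicator {0..<1} y * ennreal ((1-y)^k) * G y \<phi> \<partial>lborel) \<partial>Mn k)"
    by (rule Fubini'[symmetric]) measurable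
  also have "\<dots> = (\<integral>\<^sup>+ \<phi>. inverse (ennreal ((k+1) * a k)) * FI k a' \<phi> \<partial>Mn k)"
  proof (rule nn_integral_cong)
    fix \<phi> assume "\<phi> \<in> space (Mn k)"
    show "(\<integral>\<^sup>+ y. indicator {0..<1} y * ennreal ((1-y)^k) * G y \<phi> \<partial>lborel) =
        inverse (ennreal ((k+1) * a k)) * FI k a' \<phi>"
    proof (cases "\<phi> \<in> SS k")
      case True
      have pos: "Dn k a' \<phi> > 0" by (rule Dn_pos[OF a'pos True])
      have "(\<integral>\<^sup>+ y. indicator {0..<1} y * ennreal ((1-y)^k) * G y \<phi> \<partial>lborel) =
        (\<integral>\<^sup>+ y. indicator {0..<1} y * ennreal ((1-y)^k) * inverse (ennreal ((1-y) * Dn k a' \<phi> + y * a k)) ^ (k+2) \<partial>lborel)"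
        using True by (simp add: G_def)
      also have "\<dots> = inverse (ennreal ((k+1) * a k)) * inverse (ennreal (Dn k a' \<phi>)) ^ (k+1)"
        by (rule oneD[OF pos]) (use Suc.prems in auto)
      finally show ?thesis using True by (simp add: FI_def)
    qed (simp add: G_def FI_def)
  qed
  also have "\<dots> = inverse (ennreal ((k+1) * a k)) * (\<integral>\<^sup>+ \<phi>. FI k a' \<phi> \<partial>Mn k)"
    by (rule nn_integral_cmult) measurable
  also have "\<dots> = inverse (ennreal ((k+1) * a k)) * inverse (ennreal (fact k * (\<Prod>l\<le>k. a' l)))"
    using Suc.IH[OF a'pos] by simp
  also have "\<dots> = inverse (ennreal (fact (Suc k) * (\<Prod>l\<le>Suc k. a l)))"
  proof -
    have p1: "(\<Prod>l\<le>k. a' l) = (\<Prod>l<k. a l) * a (Suc k)"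
      by (simp add: a'_def atMost_Suc_eq_insert_0 lessThan_Suc_atMost[symmetric] lessThan_Suc)
    have p2: "(\<Prod>l\<le>Suc k. a l) = (\<Prod>l<k. a l) * a k * a (Suc k)"
      by (simp add: lessThan_Suc_atMost[symmetric] lessThan_Suc mult_ac)
    have pp: "(\<Prod>l<k. a l) > 0" using Suc.prems by (intro prod_pos) auto
    have X: "(k+1) * a k > 0" "fact k * (\<Prod>l\<le>k. a' l) > 0"
      using Suc.prems pp by (auto simp: p1)
    have "inverse (ennreal ((k+1) * a k)) * inverse (ennreal (fact k * (\<Prod>l\<le>k. a' l))) =
        inverse (ennreal (((k+1) * a k) * (fact k * (\<Prod>l\<le>k. a' l))))"
      using X by (rule inv_mult_ennreal)
    also have "((k+1) * a k) * (fact k * (\<Prod>l\<le>k. a' l)) = fact (Suc k) * (\<Prod>l\<le>Suc k. a l)"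
      unfolding p1 p2 by (simp add: algebra_simps)
    finally show ?thesis .
  qed
  finally show ?case .
qed

lemma inverse_ennreal_anti:
  assumes "(D::real) \<le> D'"
  shows "inverse (ennreal D') \<le> inverse (ennreal D)"
proof (cases "D > 0")
  case True
  then show ?thesis using assms
    by (simp add: inverse_ennreal ennreal_leI le_imp_inverse_le)
next
  case False
  then have "ennreal D = 0" by (simp add: ennreal_eq_0_iff)
  then show ?thesis by simp
qed

lemma Dn_shift: "Dn n (\<lambda>l. a l + e) t = Dn n a t + e"
  by (simp add: Dn_def algebra_simps sum.distrib sum_distrib_left)

lemma main_formula_nonneg:
  assumes "\<forall>l\<le>n. 0 \<le> a l"
  shows "(\<integral>\<^sup>+t. FI n a t \<partial>Mn n) = inverse (ennreal (fact n * (\<Prod>l\<le>n. a l)))"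
proof (cases "\<forall>l\<le>n. 0 < a l")
  case True
  then show ?thesis by (rule main_formula)
next
  case False
  then obtain l0 where l0: "l0 \<le> n" "a l0 = 0" using assms by force
  then have P0: "(\<Prod>l\<le>n. a l) = 0" by (intro prod_zero) auto
  have lower: "inverse (ennreal (fact n * (\<Prod>l\<le>n. a l + e))) \<le> (\<integral>\<^sup>+t. FI n a t \<partial>Mn n)"
    if e: "e > 0" for e
  proof -
    have "inverse (ennreal (fact n * (\<Prod>l\<le>n. a l + e))) = (\<integral>\<^sup>+t. FI n (\<lambda>l. a l + e) t \<partial>Mn n)"
      using assms e by (intro main_formula[symmetric]) (auto intro: add_nonneg_pos)
    also have "\<dots> \<le> (\<integral>\<^sup>+t. FI n a t \<partial>Mn n)"
    proof (rule nn_integral_mono)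
      fix t
      have "inverse (ennreal (Dn n (\<lambda>l. a l + e) t)) ^ Suc n \<le> inverse (ennreal (Dn n a t)) ^ Suc n"
        by (intro power_mono inverse_ennreal_anti) (use e in \<open>auto simp: Dn_shift\<close>)
      then show "FI n (\<lambda>l. a l + e) t \<le> FI n a t"
        unfolding FI_def by (intro mult_left_mono) auto
    qed
    finally show ?thesis .
  qed
  have "(\<integral>\<^sup>+t. FI n a t \<partial>Mn n) = top"
  proof (rule ccontr)
    assume "(\<integral>\<^sup>+t. FI n a t \<partial>Mn n) \<noteq> top"
    then obtain r where r: "(\<integral>\<^sup>+t. FI n a t \<partial>Mn n) = ennreal r" "r \<ge> 0"
      using ennreal_cases by (metis less_top)
    have "((\<lambda>e. fact n * (\<Prod>l\<le>n. a l + e)) \<longlongrightarrow> fact n * (\<Prod>l\<le>n. a l + 0)) (at_right 0)"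
      by (intro tendsto_intros)
    then have "((\<lambda>e. fact n * (\<Prod>l\<le>n. a l + e)) \<longlongrightarrow> 0) (at_right (0::real))"
      using P0 by simp
    then have "eventually (\<lambda>e. fact n * (\<Prod>l\<le>n. a l + e) < 1 / (r + 1)) (at_right (0::real))"
      using r(2) by (intro order_tendstoD(2)) auto
    then obtain b where b: "b > 0" "\<And>e. e > 0 \<Longrightarrow> e < b \<Longrightarrow> fact n * (\<Prod>l\<le>n. a l + e) < 1 / (r + 1)"
      unfolding eventually_at_right_field by auto
    define e where "e = b / 2"
    have e: "e > 0" "e < b" using b by (auto simp: e_def)
    define p where "p = fact n * (\<Prod>l\<le>n. a l + e)"
    have "(\<Prod>l\<le>n. a l + e) > 0" using assms e by (intro prod_pos) (auto intro: add_nonneg_pos)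
    then have p: "p > 0" "p < 1 / (r + 1)" using b(2)[OF e] unfolding p_def by auto
    have "r + 1 < 1 / p" using p r(2)
      by (simp add: field_simps)
    then have "ennreal r < ennreal (1 / p)" using r(2) by (subst ennreal_less_iff) auto
    also have "ennreal (1 / p) = inverse (ennreal p)" using p by (simp add: inverse_ennreal inverse_eq_divide)
    also have "\<dots> \<le> ennreal r" using lower[OF e(1)] r by (simp add: p_def)
    finally show False by simp
  qed
  then show ?thesis by (simp only: P0 mult_zero_right ennreal_0 ennreal_inverse_zero)
qed

lemma theta_of_meas:
  assumes "m \<ge> 1"
  shows "theta_of m \<in> measurable (PiM {..<m-1} (\<lambda>_. lborel)) (PiM {..<m} (\<lambda>_. lborel::real measure))"
proof -
  have 1: "(\<lambda>t. theta_of m t l) \<in> borel_measurable (PiM {..<m-1} (\<lambda>_. lborel))" if l: "l \<in> {..<m}" for l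
  proof (cases "l < m - 1")
    case True
    then have "(\<lambda>t. theta_of m t l) = (\<lambda>t. t l)" by (auto simp: theta_of_def)
    then show ?thesis using True by simp
  next
    case False
    then have "(\<lambda>t. theta_of m t l) = (\<lambda>t. 1 - (\<Sum>k<m-1. t k))" using l by (auto simp: theta_of_def)
    then show ?thesis by simp
  qed
  have 2: "(\<lambda>\<omega> i. theta_of m \<omega> i) \<in> space (PiM {..<m-1} (\<lambda>_. lborel)) \<rightarrow> (\<Pi>\<^sub>E l\<in>{..<m}. space (lborel::real measure))"
    using assms by (auto simp: theta_of_def PiE_def extensional_def)
  show ?thesis
    using measurable_PiM_single'[of "{..<m}" "\<lambda>i \<omega>. theta_of m \<omega> i" "PiM {..<m-1} (\<lambda>_. lborel)" "\<lambda>_. lborel"] 1 2 by simp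
qed

lemma f_crit_meas:
  "f_crit m N p X \<in> borel_measurable (PiM {..<m} (\<lambda>_. lborel))"
  unfolding f_crit_def Let_def by measurable

lemma term_eq:
  assumes "0 \<le> (D::real)"
  shows "(if D = 0 then (\<infinity>::ennreal) else ennreal ((1/D) powr (2 * real (Suc n) / 2))) = inverse (ennreal D) ^ Suc n"
proof (cases "D = 0")
  case True then show ?thesis by simp
next
  case False
  then have D: "D > 0" using assms by simp
  have "(1/D) powr (2 * real (Suc n) / 2) = (1/D) ^ Suc n"
  proof -
    have e: "2 * real (Suc n) / 2 = real (Suc n)" by simp
    show ?thesis unfolding e by (rule powr_realpow) (use D in simp)
  qed
  then show ?thesis unfolding if_not_P[OF False] inv_pow_ennreal[OF D] power_one_over by simp
qed

lemma Dn_nonneg: "\<forall>l\<le>n. 0 \<le> a l \<Longrightarrow> t \<in> SS n \<Longrightarrow> 0 \<le> Dn n a t"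
  unfolding Dn_def SS_def by (intro add_nonneg_nonneg mult_nonneg_nonneg sum_nonneg) auto

theorem theorem1:
  fixes m N :: nat
  assumes "m \<ge> 2" and "N \<ge> 2"
  shows "\<exists>C::real. \<forall>X :: nat \<Rightarrow> nat \<Rightarrow> real. (\<forall>i<N. X i \<in> S_b m) \<longrightarrow>
     (\<integral>\<^sup>+ \<theta>. f_crit m N (2 * real m) X \<theta> \<partial>H_uniform m) =
     ennreal C * (\<Sum>i<N. \<Sum>j\<in>{i+1..<N}.
        (let P = (\<Prod>l<m. (X i l - X j l)^2) in if P = 0 then (\<infinity>::ennreal) else ennreal (1 / P)))"
proof (intro exI[of _ 1] allI impI)
  fix X :: "nat \<Rightarrow> nat \<Rightarrow> real"
  obtain n where m: "m = Suc n" using assms(1) by (cases m) auto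
  have m1: "m - 1 = n" using m by simp
  define a where "a i j l = (X i l - X j l)^2" for i j l
  have a0: "\<forall>l\<le>n. 0 \<le> a i j l" for i j by (simp add: a_def)
  have Hset: "H_param m = SS n \<inter> space (Mn n)"
    by (auto simp: H_param_def SS_def Mn_def space_PiM m)
  have Hsets[measurable]: "H_param m \<in> sets (Mn n)"
    unfolding Hset by (rule SS_meas)
  define \<mu> where "\<mu> = emeasure (Mn n) (H_param m)"
  have \<mu>: "\<mu> = inverse (ennreal (fact n))"
  proof -
    have "\<mu> = (\<integral>\<^sup>+ t. indicator (H_param m) t \<partial>Mn n)"
      unfolding \<mu>_def by (rule nn_integral_indicator[symmetric]) simp
    also have "\<dots> = (\<integral>\<^sup>+ t. FI n (\<lambda>_. 1) t \<partial>Mn n)"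
      by (intro nn_integral_cong) (simp add: Hset FI_def Dn_def indicator_def)
    also have "\<dots> = inverse (ennreal (fact n))"
      by (subst main_formula) auto
    finally show ?thesis .
  qed
  have Mn_eq: "PiM {..<m-1} (\<lambda>_. lborel) = Mn n" by (simp add: Mn_def m)
  have thmeas: "theta_of m \<in> measurable (Mn n) (PiM {..<m} (\<lambda>_. lborel))"
    using theta_of_meas[of m] m unfolding Mn_def by simp
  have fm: "(\<lambda>t. f_crit m N (2 * real m) X (theta_of m t)) \<in> borel_measurable (Mn n)"
    using measurable_comp[OF thmeas f_crit_meas] by (simp add: comp_def)
  have "(\<integral>\<^sup>+ \<theta>. f_crit m N (2 * real m) X \<theta> \<partial>H_uniform m) =
      (\<integral>\<^sup>+ t. f_crit m N (2 * real m) X (theta_of m t) \<partial>uniform_measure (Mn n) (H_param m))"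
    unfolding H_uniform_def Mn_eq
  proof (rule nn_integral_distr)
    show "theta_of m \<in> measurable (uniform_measure (Mn n) (H_param m)) (PiM {..<m} (\<lambda>_. lborel))"
      using thmeas by (simp cong: measurable_cong_sets)
  qed (simp add: f_crit_meas)
  also have "\<dots> = (\<integral>\<^sup>+ t. f_crit m N (2 * real m) X (theta_of m t) * indicator (H_param m) t \<partial>Mn n) / \<mu>"
    unfolding \<mu>_def by (rule nn_integral_uniform_measure[OF fm Hsets])
  also have "(\<integral>\<^sup>+ t. f_crit m N (2 * real m) X (theta_of m t) * indicator (H_param m) t \<partial>Mn n) =
      (\<integral>\<^sup>+ t. (\<Sum>i<N. \<Sum>j\<in>{i+1..<N}. FI n (a i j) t) \<partial>Mn n)"
  proof (rule nn_integral_cong)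
    fix t assume t: "t \<in> space (Mn n)"
    have Dth: "(\<Sum>l<m. theta_of m t l * (X i l - X j l)^2) = Dn n (a i j) t" for i j
      by (simp add: m Dn_def theta_of_def a_def)
    show "f_crit m N (2 * real m) X (theta_of m t) * indicator (H_param m) t =
        (\<Sum>i<N. \<Sum>j\<in>{i+1..<N}. FI n (a i j) t)"
    proof (cases "t \<in> SS n")
      case True
      have "f_crit m N (2 * real m) X (theta_of m t) = (\<Sum>i<N. \<Sum>j\<in>{i+1..<N}. inverse (ennreal (Dn n (a i j) t)) ^ Suc n)"
        unfolding f_crit_def Let_def Dth unfolding m
        by (intro sum.cong refl term_eq Dn_nonneg[OF a0 True])
      then show ?thesis using True t by (simp add: Hset FI_def)
    next
      case False
      then show ?thesis using t by (simp add: Hset FI_def)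
    qed
  qed
  also have "\<dots> = (\<Sum>i<N. \<Sum>j\<in>{i+1..<N}. (\<integral>\<^sup>+ t. FI n (a i j) t \<partial>Mn n))"
    by (simp add: nn_integral_sum)
  also have "\<dots> = (\<Sum>i<N. \<Sum>j\<in>{i+1..<N}. inverse (ennreal (fact n * (\<Prod>l\<le>n. a i j l))))"
    by (simp add: main_formula_nonneg[OF a0])
  finally have L: "(\<integral>\<^sup>+ \<theta>. f_crit m N (2 * real m) X \<theta> \<partial>H_uniform m) =
      (\<Sum>i<N. \<Sum>j\<in>{i+1..<N}. inverse (ennreal (fact n * (\<Prod>l\<le>n. a i j l)))) / \<mu>" .
  have "inverse \<mu> = ennreal (fact n)"
    unfolding \<mu> by (simp add: inverse_ennreal)
  then have L2: "(\<integral>\<^sup>+ \<theta>. f_crit m N (2 * real m) X \<theta> \<partial>H_uniform m) =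
      (\<Sum>i<N. \<Sum>j\<in>{i+1..<N}. inverse (ennreal (fact n * (\<Prod>l\<le>n. a i j l))) * ennreal (fact n))"
    unfolding L divide_ennreal_def by (simp add: sum_distrib_right)
  have T: "inverse (ennreal (fact n * (\<Prod>l\<le>n. a i j l))) * ennreal (fact n) =
      (let P = (\<Prod>l<m. (X i l - X j l)^2) in if P = 0 then (\<infinity>::ennreal) else ennreal (1 / P))" for i j
  proof -
    have PP: "(\<Prod>l\<le>n. a i j l) = (\<Prod>l<m. (X i l - X j l)^2)"
      by (simp add: a_def m lessThan_Suc_atMost)
    define P where "P = (\<Prod>l<m. (X i l - X j l)^2)"
    have P0: "P \<ge> 0" unfolding P_def by (intro prod_nonneg) auto
    show ?thesis
    proof (cases "P = 0")
      case True
      then show ?thesis by (simp add: PP P_def[symmetric] Let_def)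
    next
      case False
      then have Pp: "P > 0" using P0 by simp
      have "inverse (ennreal (fact n * P)) * ennreal (fact n) = ennreal (inverse (fact n * P)) * ennreal (fact n)"
        using Pp by (simp add: inverse_ennreal)
      also have "\<dots> = ennreal (inverse (fact n * P) * fact n)"
        using Pp by (intro ennreal_mult[symmetric]) auto
      also have "inverse (fact n * P) * fact n = 1 / P"
        by (simp add: field_simps)
      finally show ?thesis using False by (simp add: PP P_def[symmetric] Let_def)
    qed
  qed
  show "(\<integral>\<^sup>+ \<theta>. f_crit m N (2 * real m) X \<theta> \<partial>H_uniform m) =
     ennreal 1 * (\<Sum>i<N. \<Sum>j\<in>{i+1..<N}.
        (let P = (\<Prod>l<m. (X i l - X j l)^2) in if P = 0 then (\<infinity>::ennreal) else ennreal (1 / P)))"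
    unfolding L2 T by simp
qed

end
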